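(* Let $A$ be an invertible integral $g\times g$ matrix such that \[A^t=\begin{pmatrix}\mathrm{Id}_{g-k} & Y\\ 0 & Z\end{pmatrix}\] where $Z$ is an integral $k\times k$ matrix with $Z-\mathrm{Id}$ injective and $Y$ is an integral $(g-k)\times k$ matrix. Then there is an integral $g\times g$ matrix $B$ such that \[\operatorname{im}(A-\mathrm{Id})+B\big(\ker((A^t)^{-1}-\mathrm{Id})\big)=\mathbb{Q}^g\] and $B^t(A^t)^{-1}=A^{-1}B$.
   Context: Here $A$, $B$ act on $\mathbb{Q}^g$ (column vectors); $\operatorname{im}$ and $\ker$ are taken over $\mathbb{Q}$. In the application, $\mathbb{Q}^g$ is the Lagrangian $L=\ker(H_1(\partial V_g;\mathbb{Q})\to H_1(V_g;\mathbb{Q}))$ with basis given by meridian classes. *)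

theory Defs
  imports "Jordan_Normal_Form.Matrix_Kernel"
begin

definition ratm :: "int mat \<Rightarrow> rat mat" where
  "ratm M = map_mat rat_of_int M"

definition qinv :: "rat mat \<Rightarrow> rat mat" where
  "qinv M = (THE N. N \<in> carrier_mat (dim_row M) (dim_row M) \<and>
                    M * N = 1\<^sub>m (dim_row M) \<and> N * M = 1\<^sub>m (dim_row M))"

definition mat_image :: "rat mat \<Rightarrow> rat vec set" where
  "mat_image M = (\<lambda>v. M *\<^sub>v v) ` carrier_vec (dim_col M)"

end

theory Submission
  imports Defs
begin

lemma qinv_eq:
  assumes M: "M \<in> carrier_mat n n" and N: "N \<in> carrier_mat n n" and MN: "M * N = 1\<^sub>m n"
  shows "qinv M = N"
proof -
  have NM: "N * M = 1\<^sub>m n" using mat_mult_left_right_inverse[OF M N MN] .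
  show ?thesis unfolding qinv_def
  proof (rule the_equality)
    show "N \<in> carrier_mat (dim_row M) (dim_row M) \<and> M * N = 1\<^sub>m (dim_row M) \<and> N * M = 1\<^sub>m (dim_row M)"
      using M N MN NM by auto
  next
    fix N' assume h: "N' \<in> carrier_mat (dim_row M) (dim_row M) \<and> M * N' = 1\<^sub>m (dim_row M) \<and> N' * M = 1\<^sub>m (dim_row M)"
    hence N': "N' \<in> carrier_mat n n" and N'M: "N' * M = 1\<^sub>m n" using M by auto
    have "N' = N' * (M * N)" using MN N' by simp
    also have "\<dots> = (N' * M) * N" using assoc_mult_mat[OF N' M N] by simp
    also have "\<dots> = N" using N'M N by simp
    finally show "N' = N" .
  qed
qed

lemma ratm_carr[simp]: "ratm M \<in> carrier_mat (dim_row M) (dim_col M)"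
  unfolding ratm_def by auto

lemma ratm_dims[simp]: "dim_row (ratm M) = dim_row M" "dim_col (ratm M) = dim_col M"
  unfolding ratm_def by auto

lemma ratm_index[simp]: "i < dim_row M \<Longrightarrow> j < dim_col M \<Longrightarrow> ratm M $$ (i,j) = rat_of_int (M $$ (i,j))"
  unfolding ratm_def by auto

lemma ratm_mult: "M \<in> carrier_mat n m \<Longrightarrow> N \<in> carrier_mat m l \<Longrightarrow> ratm (M * N) = ratm M * ratm N"
  unfolding ratm_def by (rule of_int_hom.mat_hom_mult)

lemma ratm_one: "ratm (1\<^sub>m n) = 1\<^sub>m n"
  unfolding ratm_def by (rule eq_matI, auto)

theorem mainTheorem5:
  fixes g k :: nat and A Y Z :: "int mat"
  assumes kg: "k \<le> g"
    and A_carr: "A \<in> carrier_mat g g"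
    and A_inv: "invertible_mat A"
    and Y_carr: "Y \<in> carrier_mat (g - k) k"
    and Z_carr: "Z \<in> carrier_mat k k"
    and At: "transpose_mat A = four_block_mat (1\<^sub>m (g - k)) Y (0\<^sub>m k (g - k)) Z"
    and Z_inj: "\<forall>v \<in> carrier_vec k. (ratm Z - 1\<^sub>m k) *\<^sub>v v = 0\<^sub>v k \<longrightarrow> v = 0\<^sub>v k"
  shows "\<exists>B :: int mat. B \<in> carrier_mat g g \<and>
     {x + y | x y. x \<in> mat_image (ratm A - 1\<^sub>m g) \<and>
                   y \<in> (\<lambda>v. ratm B *\<^sub>v v) ` mat_kernel (qinv (transpose_mat (ratm A)) - 1\<^sub>m g)}
       = carrier_vec g \<and>
     transpose_mat (ratm B) * qinv (transpose_mat (ratm A)) = qinv (ratm A) * ratm B"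
proof -
  define n where "n = g - k"
  have gnk: "g = n + k" using kg n_def by auto
  define Q where "Q = ratm A"
  have Q: "Q \<in> carrier_mat g g" using A_carr Q_def by auto
  obtain Ai where Ai1: "A * Ai = 1\<^sub>m g" and Ai2: "Ai * A = 1\<^sub>m (dim_row Ai)"
    using A_inv A_carr unfolding invertible_mat_def inverts_mat_def by auto
  have Ai: "Ai \<in> carrier_mat g g"
  proof -
    have "dim_col Ai = g" using arg_cong[OF Ai1, of dim_col] by simp
    moreover have "dim_row Ai = g" using arg_cong[OF Ai2, of dim_col] A_carr by simp
    ultimately show ?thesis by auto
  qed
  define Qi where "Qi = ratm Ai"
  have Qi: "Qi \<in> carrier_mat g g" using Ai Qi_def by auto
  have QQi: "Q * Qi = 1\<^sub>m g" unfolding Q_def Qi_def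
    using ratm_mult[OF A_carr Ai] Ai1 ratm_one by metis
  have QiQ: "Qi * Q = 1\<^sub>m g" using mat_mult_left_right_inverse[OF Q Qi QQi] .
  have qQ: "qinv Q = Qi" by (rule qinv_eq[OF Q Qi QQi])
  have QtQit: "transpose_mat Q * transpose_mat Qi = 1\<^sub>m g"
    using transpose_mult[OF Qi Q] QiQ by (metis transpose_one)
  have qQt: "qinv (transpose_mat Q) = transpose_mat Qi"
    by (rule qinv_eq[OF _ _ QtQit], insert Q Qi, auto)
  have Zd: "dim_row Z = k" "dim_col Z = k" using Z_carr by auto
  have Aent: "A $$ (i,j) = (if j < n then (if i < n then (if i=j then 1 else 0) else Y$$(j, i-n))
        else (if i < n then 0 else Z$$(j-n, i-n)))" if "i<g" "j<g" for i j
  proof -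
    have "A $$ (i,j) = transpose_mat A $$ (j,i)" using that A_carr by simp
    also have "\<dots> = four_block_mat (1\<^sub>m n) Y (0\<^sub>m k n) Z $$ (j,i)" using At n_def by simp
    also have "\<dots> = (if j < n then (if i < n then (if i=j then 1 else 0) else Y$$(j, i-n))
        else (if i < n then 0 else Z$$(j-n, i-n)))"
      using index_mat_four_block(1)[of j "1\<^sub>m n" Z i Y "0\<^sub>m k n"] that Zd gnk by simp
    finally show ?thesis .
  qed
  have Qent: "Q $$ (i,j) = rat_of_int (A $$ (i,j))" if "i<g" "j<g" for i j
    using that A_carr Q_def by simp
  have F1: "transpose_mat Q *\<^sub>v p = p" if p: "p \<in> carrier_vec g" and p0: "\<forall>i. n \<le> i \<longrightarrow> i < g \<longrightarrow> p $ i = 0" for p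
  proof (rule eq_vecI)
    fix j assume j: "j < dim_vec p"
    hence jg: "j < g" using p by auto
    have "(transpose_mat Q *\<^sub>v p) $ j = (\<Sum>i\<in>{0..<g}. Q $$ (i,j) * p $ i)"
      using jg p Q by (simp add: scalar_prod_def)
    also have "\<dots> = (\<Sum>i\<in>{0..<g}. if i = j then p $ j else 0)"
    proof (rule sum.cong[OF refl])
      fix i assume "i \<in> {0..<g}"
      hence ig: "i < g" by auto
      show "Q $$ (i,j) * p $ i = (if i = j then p $ j else 0)"
        using Qent[OF ig jg] Aent[OF ig jg] p0 ig jg by auto
    qed
    also have "\<dots> = p $ j" using jg by simp
    finally show "(transpose_mat Q *\<^sub>v p) $ j = p $ j" .
  qed (insert p Q, auto)
  have F2: "(Q *\<^sub>v p) $ j = p $ j" if p: "p \<in> carrier_vec g" and p0: "\<forall>i. n \<le> i \<longrightarrow> i < g \<longrightarrow> p $ i = 0"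
    and j: "j < n" for p j
  proof -
    have jg: "j < g" using j gnk by auto
    have "(Q *\<^sub>v p) $ j = (\<Sum>i\<in>{0..<g}. Q $$ (j,i) * p $ i)"
      using jg p Q by (simp add: scalar_prod_def)
    also have "\<dots> = (\<Sum>i\<in>{0..<g}. if i = j then p $ j else 0)"
    proof (rule sum.cong[OF refl])
      fix i assume "i \<in> {0..<g}"
      hence ig: "i < g" by auto
      show "Q $$ (j,i) * p $ i = (if i = j then p $ j else 0)"
        using Qent[OF jg ig] Aent[OF jg ig] p0 ig jg j by auto
    qed
    also have "\<dots> = p $ j" using jg by simp
    finally show ?thesis .
  qed
  define Mz where "Mz = transpose_mat (ratm Z) - 1\<^sub>m k"
  have Mz: "Mz \<in> carrier_mat k k" using Z_carr Mz_def by auto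
  have MzT: "transpose_mat Mz = ratm Z - 1\<^sub>m k"
    unfolding Mz_def by (rule eq_matI, insert Z_carr, auto)
  have RZc: "ratm Z - 1\<^sub>m k \<in> carrier_mat k k" using Zd by auto
  have "det (ratm Z - 1\<^sub>m k) \<noteq> 0"
    using det_0_iff_vec_prod_zero[OF RZc] Z_inj by blast
  hence dMz: "det Mz \<noteq> 0" using det_transpose[OF Mz] MzT by simp
  from det_non_zero_imp_unit[OF Mz dMz, of undefined]
  obtain Mi where Mi: "Mi \<in> carrier_mat k k" and MzMi: "Mz * Mi = 1\<^sub>m k"
    unfolding Units_def ring_mat_simps by auto
  have F3: "w \<in> mat_image (Q - 1\<^sub>m g)" if w: "w \<in> carrier_vec g" and w0: "\<forall>j<n. w $ j = 0" for w
  proof -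
    define w' where "w' = vec k (\<lambda>i. w $ (i + n))"
    define z where "z = Mi *\<^sub>v w'"
    have z: "z \<in> carrier_vec k" using Mi z_def w'_def by auto
    have Mzz: "Mz *\<^sub>v z = w'" unfolding z_def using assoc_mult_mat_vec[OF Mz Mi, of w'] MzMi w'_def by auto
    define u where "u = vec g (\<lambda>i. if i < n then 0 else z $ (i - n))"
    have u: "u \<in> carrier_vec g" using u_def by auto
    have Qu: "(Q *\<^sub>v u) $ j = (if j < n then 0 else (transpose_mat (ratm Z) *\<^sub>v z) $ (j - n))"
      if jg: "j < g" for j
    proof -
      have "(Q *\<^sub>v u) $ j = (\<Sum>i\<in>{0..<g}. Q $$ (j,i) * u $ i)"
        using jg u Q by (simp add: scalar_prod_def)
      also have "\<dots> = (\<Sum>i\<in>{0..<g}. if i < n then 0 else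
           (if j < n then 0 else rat_of_int (Z $$ (i-n, j-n)) * z $ (i - n)))"
      proof (rule sum.cong[OF refl])
        fix i assume "i \<in> {0..<g}"
        hence ig: "i < g" by auto
        show "Q $$ (j,i) * u $ i = (if i < n then 0 else
           (if j < n then 0 else rat_of_int (Z $$ (i-n, j-n)) * z $ (i - n)))"
          using Qent[OF jg ig] Aent[OF jg ig] ig jg u_def by auto
      qed
      also have "\<dots> = (\<Sum>i\<in>{0..<n}. 0) + (\<Sum>i\<in>{n..<g}. (if j < n then 0 else rat_of_int (Z $$ (i-n, j-n)) * z $ (i - n)))"
      proof -
        let ?F = "\<lambda>i. if i < n then 0 else
           (if j < n then 0 else rat_of_int (Z $$ (i-n, j-n)) * z $ (i - n))"
        have "sum ?F {0..<g} = sum ?F {0..<n} + sum ?F {n..<g}"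
          using sum.atLeastLessThan_concat[of 0 n g ?F] gnk by simp
        moreover have "sum ?F {0..<n} = (\<Sum>i\<in>{0..<n}. 0)" by (rule sum.cong, auto)
        moreover have "sum ?F {n..<g} = (\<Sum>i\<in>{n..<g}. (if j < n then 0 else rat_of_int (Z $$ (i-n, j-n)) * z $ (i - n)))"
          by (rule sum.cong, auto)
        ultimately show ?thesis by simp
      qed
      also have "\<dots> = (\<Sum>i\<in>{0..<k}. (if j < n then 0 else rat_of_int (Z $$ (i, j-n)) * z $ i))"
        using sum.shift_bounds_nat_ivl[of "\<lambda>i. (if j < n then 0 else rat_of_int (Z $$ (i-n, j-n)) * z $ (i - n))" 0 n k] gnk
        by (simp only: add.commute[of n k] add_diff_cancel_right' sum.neutral_const add_0)
      also have "\<dots> = (if j < n then 0 else (transpose_mat (ratm Z) *\<^sub>v z) $ (j - n))"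
        using jg gnk z Z_carr by (auto simp: scalar_prod_def intro!: sum.cong)
      finally show ?thesis .
    qed
    have "(Q - 1\<^sub>m g) *\<^sub>v u = w"
    proof (rule eq_vecI)
      fix j assume "j < dim_vec w"
      hence jg: "j < g" using w by auto
      have "((Q - 1\<^sub>m g) *\<^sub>v u) $ j = (Q *\<^sub>v u) $ j - u $ j"
        using minus_mult_distrib_mat_vec[OF Q _ u, of "1\<^sub>m g"] jg u Q by simp
      also have "\<dots> = w $ j"
      proof (cases "j < n")
        case True thus ?thesis using Qu[OF jg] w0 u_def jg by simp
      next
        case False
        hence jn: "j - n < k" using jg gnk by auto
        have "(Q *\<^sub>v u) $ j - u $ j = (transpose_mat (ratm Z) *\<^sub>v z) $ (j - n) - z $ (j - n)"
          using Qu[OF jg] False u_def jg by simp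
        also have "\<dots> = (Mz *\<^sub>v z) $ (j - n)"
        proof -
          have RZ: "transpose_mat (ratm Z) \<in> carrier_mat k k" using Zd by auto
          have "Mz *\<^sub>v z = transpose_mat (ratm Z) *\<^sub>v z - z"
            unfolding Mz_def using minus_mult_distrib_mat_vec[OF RZ _ z, of "1\<^sub>m k"] z by simp
          thus ?thesis using jn RZ z by simp
        qed
        also have "\<dots> = w $ j" using Mzz w'_def jn False by simp
        finally show ?thesis .
      qed
      finally show "((Q - 1\<^sub>m g) *\<^sub>v u) $ j = w $ j" .
    qed (insert Q w, auto)
    thus ?thesis unfolding mat_image_def using u Q by auto
  qed
  show ?thesis
  proof (intro exI[of _ A] conjI)
    show "A \<in> carrier_mat g g" by fact
    show "transpose_mat (ratm A) * qinv (transpose_mat (ratm A)) = qinv (ratm A) * ratm A"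
    proof -
      have "transpose_mat Q * qinv (transpose_mat Q) = 1\<^sub>m g" using qQt QtQit by simp
      moreover have "qinv Q * Q = 1\<^sub>m g" using qQ QiQ by simp
      ultimately show ?thesis unfolding Q_def by simp
    qed
    show "{x + y | x y. x \<in> mat_image (ratm A - 1\<^sub>m g) \<and>
                   y \<in> (\<lambda>v. ratm A *\<^sub>v v) ` mat_kernel (qinv (transpose_mat (ratm A)) - 1\<^sub>m g)}
       = carrier_vec g" (is "?S = _")
    proof
      show "?S \<subseteq> carrier_vec g"
      proof (rule subsetI)
        fix s assume "s \<in> ?S"
        then obtain x y where s: "s = x + y" and x: "x \<in> mat_image (ratm A - 1\<^sub>m g)"
          and y: "y \<in> (\<lambda>v. ratm A *\<^sub>v v) ` mat_kernel (qinv (transpose_mat (ratm A)) - 1\<^sub>m g)"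
          by blast
        from x obtain u where xu: "x = (ratm A - 1\<^sub>m g) *\<^sub>v u" unfolding mat_image_def by blast
        from y obtain v where yv: "y = ratm A *\<^sub>v v" by blast
        have "dim_vec x = g" using xu by simp
        have "dim_vec y = g" using yv A_carr by simp
        hence "dim_vec s = g" unfolding s by (simp only: index_add_vec(2))
        thus "s \<in> carrier_vec g" by (rule carrier_vecI)
      qed
    next
      show "carrier_vec g \<subseteq> ?S"
      proof
        fix v :: "rat vec" assume v: "v \<in> carrier_vec g"
        define p where "p = vec g (\<lambda>i. if i < n then v $ i else 0)"
        have p: "p \<in> carrier_vec g" and p0: "\<forall>i. n \<le> i \<longrightarrow> i < g \<longrightarrow> p $ i = 0"
          using p_def by auto
        have QiQT: "transpose_mat Qi * transpose_mat Q = 1\<^sub>m g"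
          using transpose_mult[OF Q Qi] QQi by (metis transpose_one)
        have "(transpose_mat Qi - 1\<^sub>m g) *\<^sub>v p = transpose_mat Qi *\<^sub>v p - p"
          using minus_mult_distrib_mat_vec[of "transpose_mat Qi" g g "1\<^sub>m g" p] Qi p by simp
        also have "transpose_mat Qi *\<^sub>v p = transpose_mat Qi *\<^sub>v (transpose_mat Q *\<^sub>v p)"
          using F1[OF p p0] by simp
        also have "\<dots> = p" using assoc_mult_mat_vec[of "transpose_mat Qi" g g "transpose_mat Q" g p] QiQT Q Qi p by simp
        finally have "(transpose_mat Qi - 1\<^sub>m g) *\<^sub>v p = 0\<^sub>v g" using p by simp
        hence pk: "p \<in> mat_kernel (qinv (transpose_mat Q) - 1\<^sub>m g)"
          unfolding qQt mat_kernel_def using Qi p by auto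
        define x where "x = v - Q *\<^sub>v p"
        have "x \<in> mat_image (Q - 1\<^sub>m g)"
          by (rule F3, insert v Q p F2[OF p p0], auto simp: x_def p_def gnk)
        moreover have "v = x + Q *\<^sub>v p" unfolding x_def using v Q p by auto
        ultimately show "v \<in> ?S" using pk unfolding Q_def by blast
      qed
    qed
  qed
qed

end
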